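(* Let $p_1,\dots,p_n>0$ with $\sum_i p_i=1$, let $c_1,\dots,c_n\in[-1,1]$, put $\bar c=\sum_i p_i c_i$, and fix $\Delta>0$. For $g\ge 0$ define $$I_a(g)=H_B\!\left(\frac{1+\sqrt{\bar c^{\,2}+(1-\bar c^{\,2})e^{-g^2/\Delta^2}}}{2}\right)-\sum_{i=1}^n p_i\,H_B\!\left(\frac{1+\sqrt{c_i^{2}+(1-c_i^{2})e^{-g^2/\Delta^2}}}{2}\right).$$ Then $I_a(g)$ is a monotonically non-decreasing function of $g$ on $[0,\infty)$.
   Context: $H_B(\lambda)=-\lambda\log_2\lambda-(1-\lambda)\log_2(1-\lambda)$ is the binary Shannon entropy (with $0\log 0=0$). Physical meaning: an ensemble of qubit states $\rho_i=\tfrac12\big(I+r_i(\sin\theta_i\cos\phi_i\,\sigma_x+\sin\theta_i\sin\phi_i\,\sigma_y+\cos\theta_i\,\sigma_z)\big)$, $0\le r_i\le1$, sent with probabilities $p_i$, is measured by a device with initial Gaussian wavefunction $\Phi(q)=(2\pi\Delta^2)^{-1/4}e^{-q^2/(4\Delta^2)}$ via the unitary $e^{-ig\sigma_z\otimes p}$ ($p$ the momentum operator of the device); with $c_i=r_i\cos\theta_i$, $I_a(g)=S(\rho'_D)-\sum_ip_iS(\rho'_{iD})$ is the information gain (Holevo quantity of the device states), where $\rho'_{iD}$ is the device state after interaction with $\rho_i$ and $\rho'_D=\sum_ip_i\rho'_{iD}$. *)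

theory Defs
  imports "HOL-Analysis.Analysis"
begin

definition binary_entropy :: "real \<Rightarrow> real" where
  "binary_entropy l =
     (if l = 0 then 0 else - l * log 2 l) +
     (if 1 - l = 0 then 0 else - (1 - l) * log 2 (1 - l))"

text \<open>The information gain I_a(g) for weights p, Bloch z-components c (indices 0..n-1),
  and device width Delta.\<close>
definition info_gain :: "nat \<Rightarrow> (nat \<Rightarrow> real) \<Rightarrow> (nat \<Rightarrow> real) \<Rightarrow> real \<Rightarrow> real \<Rightarrow> real" where
  "info_gain n p c D g =
     (let cbar = (\<Sum>i<n. p i * c i);
          E = exp (- (g^2) / (D^2))
      in binary_entropy ((1 + sqrt (cbar^2 + (1 - cbar^2) * E)) / 2)
         - (\<Sum>i<n. p i * binary_entropy ((1 + sqrt ((c i)^2 + (1 - (c i)^2) * E)) / 2)))"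

end

theory Submission imports Defs "HOL-Real_Asymp.Real_Asymp" begin

lemma tangent_ineq:
  fixes A B x y :: real
  assumes B: "B \<ge> 0" and AB: "A - B > 0" and x: "x^2 \<le> 1" and y: "y^2 \<le> 1"
  shows "(1-x^2)/(A-B*x^2) \<le> (1-y^2)/(A-B*y^2) - 2*(A-B)*y*(x-y)/(A-B*y^2)^2"
proof -
  have qx: "A - B*x^2 > 0" using mult_left_mono[OF x B] AB by linarith
  have qy: "A - B*y^2 > 0" using mult_left_mono[OF y B] AB by linarith
  define a where "a = A - B*x^2"
  define b where "b = A - B*y^2"
  have poly: "(1-x^2)*b^2 - (1-y^2)*a*b + 2*(A-B)*y*(x-y)*a = -((A-B)*(x-y)^2*(A+B*y*(2*x+y)))"
    unfolding a_def b_def by algebra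
  have a0: "a > 0" using qx a_def by simp
  have b0: "b > 0" using qy b_def by simp
  have id: "(1-x^2)/a - ((1-y^2)/b - 2*(A-B)*y*(x-y)/b^2)
      = -((A-B)*(x-y)^2*(A+B*y*(2*x+y))) / (a*b^2)"
  proof -
    have "(1-x^2)/a - ((1-y^2)/b - 2*(A-B)*y*(x-y)/b^2) = ((1-x^2)*b^2 - (1-y^2)*a*b + 2*(A-B)*y*(x-y)*a)/(a*b^2)"
      using a0 b0 by (simp add: field_simps power2_eq_square)
    then show ?thesis using poly by simp
  qed
  have "A + B*y*(2*x+y) \<ge> A - B*x^2"
  proof -
    have e: "y*(2*x+y) + x^2 = (x+y)^2" by algebra
    have "B*(y*(2*x+y) + x^2) \<ge> 0" unfolding e using B by simp
    then show ?thesis by (simp add: algebra_simps)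
  qed
  hence pos: "A + B*y*(2*x+y) > 0" using qx by linarith
  have "-((A-B)*(x-y)^2*(A+B*y*(2*x+y))) / ((A-B*x^2)*(A-B*y^2)^2) \<le> 0"
    using AB pos qx qy by (intro divide_nonpos_pos) (auto intro!: mult_nonneg_nonneg)
  with id show ?thesis unfolding a_def b_def by linarith
qed

lemma be_alt: "binary_entropy x = -(x*ln x + (1-x)*ln(1-x))/ln 2"
  unfolding binary_entropy_def log_def by (auto simp: field_simps)

lemma xlnx_cont: "continuous_on {0..} (\<lambda>x::real. x * ln x)"
  unfolding continuous_on_def
proof
  fix x :: real assume "x \<in> {0..}"
  show "((\<lambda>x. x * ln x) \<longlongrightarrow> x * ln x) (at x within {0..})"
  proof (cases "x = 0")
    case True
    have "((\<lambda>x::real. x * ln x) \<longlongrightarrow> 0) (at_right 0)" by real_asymp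
    then show ?thesis using True by (simp add: at_within_Ici_at_right)
  next
    case False
    with \<open>x \<in> {0..}\<close> have "x > 0" by simp
    then have "isCont (\<lambda>x. x * ln x) x" by (auto intro!: continuous_intros)
    then show ?thesis using continuous_at_imp_continuous_at_within continuous_within by blast
  qed
qed

lemma be_cont: "continuous_on {0..1} binary_entropy"
proof -
  have c1: "continuous_on {0..1} (\<lambda>x::real. x * ln x)"
    using continuous_on_subset[OF xlnx_cont] by auto
  have c2: "continuous_on {0..1} (\<lambda>x::real. (1-x) * ln (1-x))"
    by (rule continuous_on_compose2[OF xlnx_cont]) (auto intro!: continuous_intros)
  show ?thesis unfolding be_alt[abs_def]
    by (intro continuous_intros c1 c2) simp
qed

lemma hn_deriv: "0<x \<Longrightarrow> x<1 \<Longrightarrow>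
  ((\<lambda>x. -(x*ln x + (1-x)*ln(1-x))) has_real_derivative (ln(1-x) - ln x)) (at x)"
  apply (rule derivative_eq_intros refl | simp)+
  done

lemma int_rep:
  fixes r :: real assumes r: "0 < r" "r < 1"
  shows "((\<lambda>t. 1/(1 - r^2*t^2)) has_integral ((ln(1+r) - ln(1-r))/(2*r))) {0..1}"
proof -
  define f where "f t = (ln(1+r*t) - ln(1-r*t))/(2*r)" for t
  have "((\<lambda>t. 1/(1 - r^2*t^2)) has_integral (f 1 - f 0)) {0..1}"
  proof (rule fundamental_theorem_of_calculus)
    fix x :: real assume x: "x \<in> {0..1}"
    have "r*x \<le> r*1" using x r by (intro mult_left_mono) auto
    then have rx1: "r*x < 1" using r by linarith
    have rx: "r*x < 1" "r*x \<ge> 0" using rx1 x r by auto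
    have "(r*x)*(r*x) \<le> 1 * (r*x)" using rx by (intro mult_right_mono) auto
    then have den: "r*(r*(x*x)) < 1" using rx by (simp add: algebra_simps)
    have "(f has_real_derivative 1/(1 - r^2*x^2)) (at x)"
      unfolding f_def[abs_def] using rx r den
      by (auto intro!: derivative_eq_intros simp: field_simps power2_eq_square)
    then show "(f has_vector_derivative 1/(1 - r^2*x^2)) (at x within {0..1})"
      by (simp add: has_real_derivative_iff_has_vector_derivative has_vector_derivative_at_within)
  qed simp
  then show ?thesis by (simp add: f_def)
qed

definition Ef :: "real \<Rightarrow> real \<Rightarrow> real" where "Ef D g = exp (- (g^2) / (D^2))"
definition lam :: "real \<Rightarrow> real \<Rightarrow> real \<Rightarrow> real" where
  "lam D c g = (1 + sqrt (c^2 + (1 - c^2) * Ef D g)) / 2"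
definition Dv :: "real \<Rightarrow> real \<Rightarrow> real" where
  "Dv E c = (1-c^2)*(ln(1+sqrt(c^2+(1-c^2)*E)) - ln(1-sqrt(c^2+(1-c^2)*E)))/(2* sqrt(c^2+(1-c^2)*E))"
definition hn :: "real \<Rightarrow> real" where "hn x = -(x*ln x + (1-x)*ln(1-x))"

lemma Ef_pos: "Ef D g > 0" by (simp add: Ef_def)
lemma Ef_le1: "Ef D g \<le> 1" by (simp add: Ef_def)
lemma Ef_lt1: "D > 0 \<Longrightarrow> g > 0 \<Longrightarrow> Ef D g < 1" by (simp add: Ef_def)

lemma lam_deriv:
  assumes "c^2 + (1 - c^2) * Ef D g > 0" "D > 0"
  shows "(lam D c has_real_derivative
     (-(1-c^2)*Ef D g*g/(2* sqrt(c^2 + (1 - c^2) * Ef D g)*D^2))) (at g)"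
proof -
  define S where "S g = c^2 + (1-c^2)*exp(-(g^2)/(D^2))" for g
  have dS: "(S has_real_derivative ((1-c^2)*exp(-(g^2)/(D^2))*(-(2*g)/D^2))) (at g)"
    unfolding S_def[abs_def] using assms by (auto intro!: derivative_eq_intros simp: power2_eq_square)
  have Sp: "S g > 0" using assms by (simp add: S_def Ef_def)
  have "((\<lambda>g. (1 + sqrt (S g))/2) has_real_derivative
       ((0 + inverse (sqrt (S g)) / 2 * ((1-c^2)*exp(-(g^2)/(D^2))*(-(2*g)/D^2))) / 2)) (at g)"
    by (intro DERIV_cdivide DERIV_add DERIV_const DERIV_chain2[OF DERIV_real_sqrt[OF Sp] dS])
  moreover have "lam D c = (\<lambda>g. (1 + sqrt (S g))/2)" by (auto simp: lam_def S_def Ef_def)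
  moreover have "(0 + inverse (sqrt (S g)) / 2 * ((1-c^2)*exp(-(g^2)/(D^2))*(-(2*g)/D^2))) / 2
     = (-(1-c^2)*Ef D g*g/(2 * sqrt(c^2 + (1 - c^2) * Ef D g)*D^2))"
    using assms by (simp add: S_def Ef_def field_simps)
  ultimately show ?thesis by simp
qed

lemma F_deriv:
  assumes c: "c^2 \<le> 1" and D: "D > 0" and g: "g > 0"
  shows "((\<lambda>g. binary_entropy (lam D c g)) has_real_derivative
           (g * Ef D g/(D^2 * ln 2)) * Dv (Ef D g) c) (at g)"
proof (cases "c^2 = 1")
  case True
  then have "(\<lambda>g. binary_entropy (lam D c g)) = (\<lambda>g. 0)"
    by (auto simp: lam_def binary_entropy_def)
  moreover have "Dv (Ef D g) c = 0" using True by (simp add: Dv_def)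
  ultimately show ?thesis by simp
next
  case False
  with c have c1: "c^2 < 1" by simp
  define E where "E = Ef D g"
  have E: "0 < E" "E < 1" using Ef_pos Ef_lt1[OF D g] by (auto simp: E_def)
  define s where "s = c^2 + (1 - c^2) * E"
  have s0: "s > 0"
  proof -
    have "(1 - c^2) * E > 0" using c1 E by simp
    then show ?thesis unfolding s_def by (smt (verit) zero_le_power2)
  qed
  have s1: "s < 1"
  proof -
    have "(1 - c^2) * (1 - E) > 0" using c1 E by simp
    then show ?thesis unfolding s_def by (simp add: algebra_simps)
  qed
  define r where "r = sqrt s"
  have r: "0 < r" "r < 1" using s0 s1 by (auto simp: r_def)
  have lamr: "lam D c g = (1 + r)/2" by (simp add: lam_def r_def s_def E_def)
  have hd: "(hn has_real_derivative (ln(1 - lam D c g) - ln (lam D c g))) (at (lam D c g))"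
    unfolding hn_def[abs_def] lamr using r by (intro hn_deriv) auto
  have ld: "(lam D c has_real_derivative (-(1-c^2)*E*g/(2*r*D^2))) (at g)"
    using lam_deriv[of c D g] s0 D by (simp add: E_def s_def r_def)
  have "((\<lambda>g. hn (lam D c g) / ln 2) has_real_derivative
          (ln(1 - lam D c g) - ln (lam D c g)) * (-(1-c^2)*E*g/(2*r*D^2)) / ln 2) (at g)"
    by (intro DERIV_cdivide DERIV_chain2[OF hd ld])
  moreover have "(\<lambda>g. hn (lam D c g) / ln 2) = (\<lambda>g. binary_entropy (lam D c g))"
    by (simp add: hn_def be_alt)
  moreover have "(ln(1 - lam D c g) - ln (lam D c g)) * (-(1-c^2)*E*g/(2*r*D^2)) / ln 2
      = (g * Ef D g/(D^2 * ln 2)) * Dv (Ef D g) c"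
  proof -
    have l1: "ln(1 - lam D c g) = ln (1 - r) - ln 2"
    proof -
      have e: "1 - lam D c g = (1-r)/2" by (simp add: lamr field_simps)
      show ?thesis unfolding e using r by (simp add: ln_div)
    qed
    have l2: "ln(lam D c g) = ln (1 + r) - ln 2" unfolding lamr using r
      by (simp add: ln_div)
    have dv: "Dv E c = (1-c^2)*(ln(1+r) - ln(1-r))/(2*r)"
      by (simp add: Dv_def r_def s_def)
    show ?thesis unfolding l1 l2 E_def[symmetric] dv using r D
      by (simp add: field_simps)
  qed
  ultimately show ?thesis by simp
qed

lemma D_int:
  assumes E: "0 < E" "E < 1" and c: "c^2 \<le> 1"
  shows "((\<lambda>t. if t = 1 then 0 else (1-c^2)/(1 - t^2*(c^2+(1-c^2)*E))) has_integral Dv E c) {0..1}"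
proof (cases "c^2 = 1")
  case True
  then have z: "1 - c^2 = 0" by simp
  have f0: "(\<lambda>t::real. if t = 1 then 0 else (1-c^2)/(1 - t^2*(c^2+(1-c^2)*E))) = (\<lambda>t. 0)"
    unfolding z by (rule ext) simp
  have d0: "Dv E c = 0" unfolding Dv_def z by simp
  show ?thesis unfolding f0 d0 by (rule has_integral_0)
next
  case False
  with c have c1: "c^2 < 1" by simp
  define s where "s = c^2 + (1 - c^2) * E"
  have s0: "s > 0"
  proof -
    have "(1 - c^2) * E > 0" using c1 E by simp
    then show ?thesis unfolding s_def by (smt (verit) zero_le_power2)
  qed
  have s1: "s < 1"
  proof -
    have "(1 - c^2) * (1 - E) > 0" using c1 E by simp
    then show ?thesis unfolding s_def by (simp add: algebra_simps)
  qed
  define r where "r = sqrt s"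
  have r: "0 < r" "r < 1" using s0 s1 by (auto simp: r_def)
  have rs: "r^2 = s" using s0 by (simp add: r_def)
  have "((\<lambda>t. (1-c^2) * (1/(1 - r^2*t^2))) has_integral ((1-c^2) * ((ln(1+r) - ln(1-r))/(2*r)))) {0..1}"
    by (rule has_integral_mult_right[OF int_rep[OF r]])
  then have hi: "((\<lambda>t. (1-c^2) * (1/(1 - r^2*t^2))) has_integral Dv E c) {0..1}"
    by (simp add: Dv_def r_def[symmetric] s_def[symmetric])
  show ?thesis
    by (rule has_integral_spike_finite[of "{1}", OF _ _ hi]) (auto simp: rs s_def mult.commute)
qed

lemma phi_tangent:
  fixes t E x y :: real
  assumes t: "0 \<le> t" "t < 1" and E: "0 < E" "E < 1" and x: "x^2 \<le> 1" and y: "y^2 \<le> 1"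
  shows "(1-x^2)/(1 - t^2*(x^2+(1-x^2)*E)) \<le> (1-y^2)/(1 - t^2*(y^2+(1-y^2)*E))
           - 2*(1-t^2)*y*(x-y)/(1 - t^2*(y^2+(1-y^2)*E))^2"
proof -
  have t2: "t^2 < 1" using t by (simp add: power_less_one_iff abs_square_less_1)
  have B: "t^2*(1-E) \<ge> 0" using E by simp
  have AB: "(1 - t^2*E) - t^2*(1-E) > 0" using t2 by (simp add: algebra_simps)
  have e1: "\<And>z::real. 1 - t^2*(z^2+(1-z^2)*E) = (1 - t^2*E) - t^2*(1-E)*z^2"
    by (simp add: algebra_simps)
  have e2: "(1 - t^2*E) - t^2*(1-E) = 1 - t^2" by (simp add: algebra_simps)
  show ?thesis using tangent_ineq[OF B AB x y] unfolding e1 e2 .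
qed

lemma jensen_tan:
  fixes p f c :: "nat \<Rightarrow> real"
  assumes "finite I" "\<And>i. i \<in> I \<Longrightarrow> p i \<ge> 0" "(\<Sum>i\<in>I. p i) = 1"
    and "\<And>i. i \<in> I \<Longrightarrow> f i \<le> F0 - K*(c i - (\<Sum>j\<in>I. p j * c j))"
  shows "(\<Sum>i\<in>I. p i * f i) \<le> F0"
proof -
  define y where "y = (\<Sum>j\<in>I. p j * c j)"
  have "(\<Sum>i\<in>I. p i * f i) \<le> (\<Sum>i\<in>I. p i * (F0 - K*(c i - y)))"
    using assms by (intro sum_mono mult_left_mono) (auto simp: y_def)
  also have "\<dots> = F0 * (\<Sum>i\<in>I. p i) - K * ((\<Sum>i\<in>I. p i * c i) - y * (\<Sum>i\<in>I. p i))"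
    by (simp add: algebra_simps sum_subtractf sum_distrib_left sum_distrib_right sum.distrib)
  also have "\<dots> = F0" using assms(3) by (simp add: y_def)
  finally show ?thesis .
qed

lemma concave_ineq:
  fixes p c :: "nat \<Rightarrow> real"
  assumes E: "0 < E" "E < 1" and p: "\<And>i. i < n \<Longrightarrow> p i > 0" and ps: "(\<Sum>i<n. p i) = 1"
    and ci: "\<And>i. i < n \<Longrightarrow> (c i)^2 \<le> 1" and cb: "(\<Sum>i<n. p i * c i)^2 \<le> 1"
  shows "(\<Sum>i<n. p i * Dv E (c i)) \<le> Dv E (\<Sum>i<n. p i * c i)"
proof -
  define cbar where "cbar = (\<Sum>i<n. p i * c i)"
  define \<psi> where "\<psi> x t = (if t = 1 then 0 else (1-x^2)/(1 - t^2*(x^2+(1-x^2)*E)))" for x t :: real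
  have h1: "((\<lambda>t. \<Sum>i<n. p i * \<psi> (c i) t) has_integral (\<Sum>i<n. p i * Dv E (c i))) {0..1}"
    unfolding \<psi>_def by (intro has_integral_sum has_integral_mult_right D_int E ci) auto
  have h2: "(\<psi> cbar has_integral Dv E cbar) {0..1}"
    unfolding \<psi>_def[abs_def] using cb by (intro D_int E) (simp add: cbar_def)
  have "(\<Sum>i<n. p i * Dv E (c i)) \<le> Dv E cbar"
  proof (rule has_integral_le[OF h1 h2])
    fix t :: real assume t: "t \<in> {0..1}"
    show "(\<Sum>i<n. p i * \<psi> (c i) t) \<le> \<psi> cbar t"
    proof (cases "t = 1")
      case True then show ?thesis by (simp add: \<psi>_def)
    next
      case False
      with t have t1: "0 \<le> t" "t < 1" by auto
      show ?thesis
      proof (rule jensen_tan[where K = "2*(1-t^2)*cbar/(1 - t^2*(cbar^2+(1-cbar^2)*E))^2"])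
        fix i assume "i \<in> {..<n}"
        then have "(c i)^2 \<le> 1" using ci by simp
        have cbb: "cbar^2 \<le> 1" using cb by (simp add: cbar_def)
        note tg = phi_tangent[OF t1 E \<open>(c i)^2 \<le> 1\<close> cbb]
        show "\<psi> (c i) t \<le> \<psi> cbar t - 2*(1-t^2)*cbar/(1 - t^2*(cbar^2+(1-cbar^2)*E))^2 * (c i - (\<Sum>j<n. p j * c j))"
          unfolding cbar_def[symmetric] \<psi>_def using False tg by simp
      qed (use p ps in \<open>auto intro: less_imp_le\<close>)
    qed
  qed
  then show ?thesis by (simp add: cbar_def)
qed

lemma be_lam_cont:
  assumes c: "c^2 \<le> 1"
  shows "continuous_on UNIV (\<lambda>g. binary_entropy (lam D c g))"
proof (rule continuous_on_compose2[OF be_cont])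
  show "continuous_on UNIV (lam D c)" unfolding lam_def[abs_def] Ef_def divide_inverse
    by (intro continuous_intros)
  show "lam D c ` UNIV \<subseteq> {0..1}"
  proof
    fix x assume "x \<in> lam D c ` UNIV"
    then obtain g where x: "x = lam D c g" by auto
    have a: "(1 - c^2) * Ef D g \<le> (1 - c^2) * 1" using c Ef_le1 by (intro mult_left_mono) auto
    have b: "(1 - c^2) * Ef D g \<ge> 0" using c Ef_pos[of D g] by simp
    have "c^2 + (1 - c^2) * Ef D g \<le> 1" "c^2 + (1 - c^2) * Ef D g \<ge> 0" using a b by auto
    then have "sqrt (c^2 + (1 - c^2) * Ef D g) \<le> 1" "sqrt (c^2 + (1 - c^2) * Ef D g) \<ge> 0" by auto
    then show "x \<in> {0..1}" by (simp add: x lam_def)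
  qed
qed

theorem theorem1:
  fixes n :: nat and p c :: "nat \<Rightarrow> real" and \<Delta> :: real
  assumes "\<And>i. i < n \<Longrightarrow> p i > 0"
    and "(\<Sum>i<n. p i) = 1"
    and "\<And>i. i < n \<Longrightarrow> -1 \<le> c i \<and> c i \<le> 1"
    and "\<Delta> > 0"
  shows "mono_on {0..} (info_gain n p c \<Delta>)"
proof -
  define cb where "cb = (\<Sum>i<n. p i * c i)"
  have ci: "(c i)^2 \<le> 1" if "i < n" for i
    using assms(3)[OF that] by (simp add: abs_square_le_1 abs_le_iff)
  have "\<bar>cb\<bar> \<le> (\<Sum>i<n. \<bar>p i * c i\<bar>)" unfolding cb_def by (rule sum_abs)
  also have "\<dots> \<le> (\<Sum>i<n. p i)"
  proof (intro sum_mono)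
    fix i assume "i \<in> {..<n}"
    then have "p i > 0" "\<bar>c i\<bar> \<le> 1" using assms(1,3) by (auto simp: abs_le_iff)
    then show "\<bar>p i * c i\<bar> \<le> p i" by (simp add: abs_mult mult_left_le)
  qed
  finally have cb1: "cb^2 \<le> 1" using assms(2) by (simp add: abs_square_le_1)
  have IG: "info_gain n p c \<Delta> = (\<lambda>g. binary_entropy (lam \<Delta> cb g)
              - (\<Sum>i<n. p i * binary_entropy (lam \<Delta> (c i) g)))"
    by (simp add: fun_eq_iff info_gain_def Let_def lam_def Ef_def cb_def)
  have cont: "continuous_on UNIV (info_gain n p c \<Delta>)"
    unfolding IG using cb1 ci
    by (intro continuous_intros be_lam_cont) auto
  have der: "\<exists>y. DERIV (info_gain n p c \<Delta>) g :> y \<and> y \<ge> 0" if g: "g > 0" for g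
  proof -
    define k where "k = g * Ef \<Delta> g/(\<Delta>^2 * ln 2)"
    have k: "k > 0" using g assms(4) Ef_pos[of \<Delta> g] by (simp add: k_def)
    have "DERIV (info_gain n p c \<Delta>) g :> k * Dv (Ef \<Delta> g) cb - (\<Sum>i<n. p i * (k * Dv (Ef \<Delta> g) (c i)))"
      unfolding IG k_def using cb1 ci assms(4) g
      by (intro DERIV_diff DERIV_sum DERIV_cmult F_deriv) auto
    moreover have "k * Dv (Ef \<Delta> g) cb - (\<Sum>i<n. p i * (k * Dv (Ef \<Delta> g) (c i))) \<ge> 0"
    proof -
      have "(\<Sum>i<n. p i * Dv (Ef \<Delta> g) (c i)) \<le> Dv (Ef \<Delta> g) cb"
        unfolding cb_def
        using concave_ineq[OF Ef_pos Ef_lt1[OF assms(4) g] assms(1,2) ci] cb1 by (simp add: cb_def)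
      then have "k * (\<Sum>i<n. p i * Dv (Ef \<Delta> g) (c i)) \<le> k * Dv (Ef \<Delta> g) cb"
        using k by (intro mult_left_mono) auto
      then show ?thesis by (simp add: sum_distrib_left algebra_simps)
    qed
    ultimately show ?thesis by blast
  qed
  show ?thesis unfolding mono_on_def
  proof (intro allI impI)
    fix x y :: real assume xy: "x \<in> {0..} \<and> y \<in> {0..} \<and> x \<le> y"
    show "info_gain n p c \<Delta> x \<le> info_gain n p c \<Delta> y"
      by (rule DERIV_nonneg_imp_increasing_open[of x y])
         (use xy der continuous_on_subset[OF cont] in auto)
  qed
qed

end
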